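(* For every integer $r\ge1$ and every $n\ge0$, $$B^{(r)}_{n,q}(x)=\sum_{k=0}^{n}\binom{n}{k}_q\left(\int_0^1B^{(r)}_{n-k,q}(y)\,d_qy\right)B_{k,q}(x)=\sum_{k=0}^{n}\binom{n}{k}_qB^{(r-1)}_{n-k,q}\,B_{k,q}(x);$$ in particular $\int_0^1B^{(r)}_{m,q}(y)\,d_qy=B^{(r-1)}_{m,q}$ for all $m\ge0$.
   Context: Fix $q$ with $0<q<1$. For an integer $n\geq 0$ let $[n]_q=\frac{1-q^n}{1-q}$, $[n]_q!=[n]_q[n-1]_q\cdots[1]_q$ (with $[0]_q!=1$), and for $0\le l\le n$ let $\binom{n}{l}_q=\frac{[n]_q!}{[l]_q!\,[n-l]_q!}$. Let $e_q(t)=\sum_{n\ge0}\frac{t^n}{[n]_q!}$ (a formal power series). The $q$-Bernoulli polynomials $B_{n,q}(x)$ are defined by $\frac{t}{e_q(t)-1}e_q(xt)=\sum_{n\ge0}B_{n,q}(x)\frac{t^n}{[n]_q!}$. For an integer $r\ge0$, the $q$-Bernoulli polynomials of order $r$ are defined by $\left(\frac{t}{e_q(t)-1}\right)^{r}e_q(xt)=\sum_{n\ge0}B^{(r)}_{n,q}(x)\frac{t^n}{[n]_q!}$, with $B^{(r)}_{n,q}=B^{(r)}_{n,q}(0)$ (so $B^{(0)}_{n,q}=\delta_{n,0}$ and $B^{(1)}_{n,q}(x)=B_{n,q}(x)$). The Jackson $q$-integral is $\int_0^1 f(y)\,d_qy=(1-q)\sum_{a=0}^{\infty}f(q^a)q^a$.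 *)

theory Defs
  imports Complex_Main "HOL-Computational_Algebra.Formal_Power_Series"
begin

definition qint :: "real \<Rightarrow> nat \<Rightarrow> real" where
  "qint q n = (1 - q ^ n) / (1 - q)"

definition qfact :: "real \<Rightarrow> nat \<Rightarrow> real" where
  "qfact q n = (\<Prod>i = 1..n. qint q i)"

definition qbinom :: "real \<Rightarrow> nat \<Rightarrow> nat \<Rightarrow> real" where
  "qbinom q n l = qfact q n / (qfact q l * qfact q (n - l))"

text \<open>The formal power series e_q(x t) in the variable t; e_q(t) is the case x = 1.\<close>
definition eq_fps :: "real \<Rightarrow> real \<Rightarrow> real fps" where
  "eq_fps q x = Abs_fps (\<lambda>n. x ^ n / qfact q n)"

definition qBernoulli_poly :: "real \<Rightarrow> nat \<Rightarrow> real \<Rightarrow> real" where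
  "qBernoulli_poly q n x =
     qfact q n * fps_nth ((fps_X / (eq_fps q 1 - 1)) * eq_fps q x) n"

definition qBernoulli_poly_ord :: "real \<Rightarrow> nat \<Rightarrow> nat \<Rightarrow> real \<Rightarrow> real" where
  "qBernoulli_poly_ord q r n x =
     qfact q n * fps_nth ((fps_X / (eq_fps q 1 - 1)) ^ r * eq_fps q x) n"

definition qBernoulli_ord :: "real \<Rightarrow> nat \<Rightarrow> nat \<Rightarrow> real" where
  "qBernoulli_ord q r n = qBernoulli_poly_ord q r n 0"

definition jackson_int :: "real \<Rightarrow> (real \<Rightarrow> real) \<Rightarrow> real" where
  "jackson_int q f = (1 - q) * (\<Sum>a. f (q ^ a) * q ^ a)"

end

theory Submission
  imports Defs
begin

lemma qint_pos: "0 < q \<Longrightarrow> q < 1 \<Longrightarrow> 1 \<le> i \<Longrightarrow> qint q i > 0"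
  unfolding qint_def
  by (simp add: power_less_one_iff divide_pos_pos)

lemma qfact_pos: "0 < q \<Longrightarrow> q < 1 \<Longrightarrow> qfact q n > 0"
  unfolding qfact_def by (rule prod_pos) (auto intro: qint_pos)

lemma qfact_Suc: "qfact q (Suc n) = qfact q n * qint q (Suc n)"
  unfolding qfact_def by (simp add: prod.cl_ivl_Suc)

lemma jackson_mono:
  fixes q :: real
  assumes "0 < q" "q < 1"
  shows "(\<lambda>a. (q ^ a) ^ k * q ^ a) sums (1 / (1 - q ^ Suc k))"
proof -
  have e: "(\<lambda>a. (q ^ a) ^ k * q ^ a) = (\<lambda>a. (q ^ Suc k) ^ a)"
    proof (rule ext)
    fix a
    have "(q ^ a) ^ k * q ^ a = q ^ (a * k + a)" by (simp add: power_add power_mult)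
    also have "\<dots> = q ^ (Suc k * a)" by (simp add: algebra_simps)
    also have "\<dots> = (q ^ Suc k) ^ a" by (rule power_mult)
    finally show "(q ^ a) ^ k * q ^ a = (q ^ Suc k) ^ a" .
  qed
  have "\<bar>q ^ Suc k\<bar> < 1" using power_Suc_less_one[OF assms, of k] assms by simp
  then show ?thesis unfolding e by (intro geometric_sums) simp
qed

lemma jackson_int_mono:
  assumes "0 < q" "q < 1"
  shows "jackson_int q (\<lambda>y. y ^ k) = 1 / qint q (Suc k)"
proof -
  have "q ^ Suc k < 1" using assms by (rule power_Suc_less_one)
  have S: "(\<Sum>a. (q ^ a) ^ k * q ^ a) = 1 / (1 - q ^ Suc k)"
    using sums_unique[OF jackson_mono[OF assms, of k]] by simp
  have "jackson_int q (\<lambda>y. y ^ k) = (1 - q) * (1 / (1 - q ^ Suc k))"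
    unfolding jackson_int_def S ..
  also have "\<dots> = 1 / qint q (Suc k)"
    unfolding qint_def using assms \<open>q ^ Suc k < 1\<close> by (simp add: field_simps)
  finally show ?thesis .
qed

lemma jackson_int_lin:
  assumes "0 < q" "q < 1" "finite A"
  shows "jackson_int q (\<lambda>y. \<Sum>i\<in>A. c i * y ^ e i) = (\<Sum>i\<in>A. c i * jackson_int q (\<lambda>y. y ^ e i))"
proof -
  have s: "\<And>i. summable (\<lambda>a. c i * ((q ^ a) ^ e i * q ^ a))"
    using jackson_mono[OF assms(1,2)] by (intro summable_mult) (auto simp: sums_iff)
  have "(\<Sum>a. (\<Sum>i\<in>A. c i * (q ^ a) ^ e i) * q ^ a) = (\<Sum>a. \<Sum>i\<in>A. c i * ((q ^ a) ^ e i * q ^ a))"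
    by (simp add: sum_distrib_right mult.assoc)
  also have "\<dots> = (\<Sum>i\<in>A. \<Sum>a. c i * ((q ^ a) ^ e i * q ^ a))"
    using s by (rule suminf_sum)
  also have "\<dots> = (\<Sum>i\<in>A. c i * (\<Sum>a. (q ^ a) ^ e i * q ^ a))"
    using jackson_mono[OF assms(1,2)] by (intro sum.cong refl suminf_mult) (auto simp: sums_iff)
  finally show ?thesis unfolding jackson_int_def
    by (simp add: sum_distrib_left mult.left_commute)
qed

lemma jackson_summable:
  fixes q :: real
  assumes "0 < q" "q < 1" "finite A"
  shows "summable (\<lambda>a. (\<Sum>i\<in>A. c i * (q ^ a) ^ e i) * q ^ a)"
proof -
  have "summable (\<lambda>a. \<Sum>i\<in>A. c i * ((q ^ a) ^ e i * q ^ a))"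
    using jackson_mono[OF assms(1,2)] by (intro summable_sum summable_mult) (auto simp: sums_iff)
  then show ?thesis by (simp add: sum_distrib_right mult.assoc)
qed

lemma jackson_int_cmult:
  assumes "summable (\<lambda>a. f (q ^ a) * q ^ a)"
  shows "jackson_int q (\<lambda>y. c * f y) = c * jackson_int q f"
  unfolding jackson_int_def using suminf_mult[OF assms, of c]
  by (simp add: mult.assoc mult.left_commute)

definition Tq :: "real \<Rightarrow> real fps" where
  "Tq q = fps_X / (eq_fps q 1 - 1)"

definition Dq :: "real \<Rightarrow> real fps" where
  "Dq q = Abs_fps (\<lambda>n. 1 / qfact q (Suc n))"

lemma qfact_0 [simp]: "qfact q 0 = 1"
  unfolding qfact_def by simp

lemma E1: "eq_fps q 1 - 1 = fps_X * Dq q"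
  by (rule fps_ext) (auto simp: eq_fps_def Dq_def)

lemma E0: "eq_fps q 0 = 1"
  by (rule fps_ext) (auto simp: eq_fps_def)

lemma TD:
  assumes "0 < q" "q < 1"
  shows "Tq q * Dq q = 1"
proof -
  have D0: "fps_nth (Dq q) 0 \<noteq> 0" using qfact_pos[OF assms, of 1] by (simp add: Dq_def)
  have "Tq q = (1 * fps_X) / (Dq q * fps_X)"
    unfolding Tq_def E1 by (simp add: mult.commute)
  also have "\<dots> = 1 / Dq q" by (rule fps_divide_cancel) simp
  also have "\<dots> = inverse (Dq q)" using D0 by (simp add: fps_divide_unit)
  finally show ?thesis using D0 by auto
qed

lemma ord_poly:
  "qBernoulli_poly_ord q r m y =
     qfact q m * (\<Sum>i=0..m. (fps_nth ((Tq q)^r) i / qfact q (m-i)) * y^(m-i))"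
  unfolding qBernoulli_poly_ord_def Tq_def fps_mult_nth
  by (simp add: eq_fps_def)

lemma jack_ord:
  assumes "0 < q" "q < 1" "1 \<le> r"
  shows "jackson_int q (\<lambda>y. qBernoulli_poly_ord q r m y) = qBernoulli_ord q (r - 1) m"
proof -
  have "jackson_int q (\<lambda>y. qBernoulli_poly_ord q r m y) =
     jackson_int q (\<lambda>y. qfact q m * (\<Sum>i=0..m. (fps_nth ((Tq q)^r) i / qfact q (m-i)) * y^(m-i)))"
    unfolding ord_poly ..
  also have "\<dots> = qfact q m * jackson_int q (\<lambda>y. \<Sum>i=0..m. (fps_nth ((Tq q)^r) i / qfact q (m-i)) * y^(m-i))"
    by (rule jackson_int_cmult[OF jackson_summable[OF assms(1,2)]]) simp
  also have "\<dots> = qfact q m * (\<Sum>i=0..m. (fps_nth ((Tq q)^r) i / qfact q (m-i)) * (1 / qint q (Suc (m - i))))"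
    by (subst jackson_int_lin[OF assms(1,2)]) (simp_all add: jackson_int_mono[OF assms(1,2)])
  also have "\<dots> = qfact q m * fps_nth ((Tq q)^r * Dq q) m"
    by (simp add: fps_mult_nth Dq_def qfact_Suc)
  also have "(Tq q)^r * Dq q = (Tq q)^(r-1) * (Tq q * Dq q)"
    using assms(3) by (cases r) (auto simp: mult.assoc)
  also have "\<dots> = (Tq q)^(r-1)" using TD[OF assms(1,2)] by simp
  finally show ?thesis
    unfolding qBernoulli_ord_def qBernoulli_poly_ord_def E0 Tq_def by simp
qed


lemma main_id:
  assumes "0 < q" "q < 1" "1 \<le> r"
  shows "qBernoulli_poly_ord q r n x =
    (\<Sum>k = 0..n. qbinom q n k * qBernoulli_ord q (r - 1) (n - k) * qBernoulli_poly q k x)"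
proof -
  have e: "(Tq q)^r * eq_fps q x = (Tq q * eq_fps q x) * (Tq q)^(r-1)"
    using assms(3) by (cases r) (auto simp: algebra_simps)
  have o: "qBernoulli_ord q (r - 1) j = qfact q j * fps_nth ((Tq q)^(r-1)) j" for j
    unfolding qBernoulli_ord_def qBernoulli_poly_ord_def E0 Tq_def by simp
  have p: "qBernoulli_poly q k x = qfact q k * fps_nth (Tq q * eq_fps q x) k" for k
    unfolding qBernoulli_poly_def Tq_def ..
  have "qBernoulli_poly_ord q r n x = qfact q n * fps_nth ((Tq q)^r * eq_fps q x) n"
    unfolding qBernoulli_poly_ord_def Tq_def ..
  also have "\<dots> = (\<Sum>k = 0..n. qfact q n * (fps_nth (Tq q * eq_fps q x) k * fps_nth ((Tq q)^(r-1)) (n - k)))"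
    unfolding e fps_mult_nth sum_distrib_left ..
  also have "\<dots> = (\<Sum>k = 0..n. qbinom q n k * qBernoulli_ord q (r - 1) (n - k) * qBernoulli_poly q k x)"
  proof (rule sum.cong[OF refl])
    fix k
    have "qfact q k > 0" "qfact q (n - k) > 0" using qfact_pos[OF assms(1,2)] by auto
    then show "qfact q n * (fps_nth (Tq q * eq_fps q x) k * fps_nth ((Tq q)^(r-1)) (n - k)) =
      qbinom q n k * qBernoulli_ord q (r - 1) (n - k) * qBernoulli_poly q k x"
      unfolding o p qbinom_def by (simp add: field_simps)
  qed
  finally show ?thesis .
qed

theorem theorem4:
  fixes q x :: real and r n :: nat
  assumes "0 < q" and "q < 1" and "1 \<le> r"
  shows "qBernoulli_poly_ord q r n x =
           (\<Sum>k = 0..n. qbinom q n k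
              * jackson_int q (\<lambda>y. qBernoulli_poly_ord q r (n - k) y)
              * qBernoulli_poly q k x)
       \<and> (\<Sum>k = 0..n. qbinom q n k
              * jackson_int q (\<lambda>y. qBernoulli_poly_ord q r (n - k) y)
              * qBernoulli_poly q k x)
         = (\<Sum>k = 0..n. qbinom q n k * qBernoulli_ord q (r - 1) (n - k) * qBernoulli_poly q k x)
       \<and> (\<forall>m. jackson_int q (\<lambda>y. qBernoulli_poly_ord q r m y) = qBernoulli_ord q (r - 1) m)"
  using main_id[OF assms, of n x] jack_ord[OF assms] by simp

end
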